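(* Let $\Omega := \{0,1\}^{\mathbb{Z}}$, let $\tau:\Omega\to\Omega$ be the shift $(\tau\omega)(x) := \omega(x-1)$, and let $T:\mathbb{Z}\to\mathbb{Z}$ be $Tx:=x+1$. Let $\Delta\notin\mathbb{Z}$ be an extra symbol and set $T(\Delta):=\Delta$. Then there exists a function $X:\Omega\to\mathbb{Z}\cup\{\Delta\}$ such that $X^{-1}\{\Delta\}$ is countable and $X(\tau\omega)=T(X(\omega))$ for all $\omega\in\Omega$.
   Context: The axiom of choice (equivalently, the well-ordering principle) is assumed. *)

theory Defs
  imports Main "HOL-Library.Countable_Set"
begin

text \<open>Omega = {0,1}^Z is modelled as int => bool (False = 0, True = 1).\<close>
type_synonym config = "int \<Rightarrow> bool"

definition tau :: "config \<Rightarrow> config" where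
  "tau \<omega> = (\<lambda>x. \<omega> (x - 1))"

text \<open>Z extended by Delta is modelled as int option, with None = Delta.
  T x = x + 1 on Z and T Delta = Delta.\<close>
definition T :: "int option \<Rightarrow> int option" where
  "T = map_option (\<lambda>x. x + 1)"

end

theory Submission
  imports Defs
begin

definition sh :: "int \<Rightarrow> config \<Rightarrow> config" where
  "sh k \<omega> = (\<lambda>x. \<omega> (x - k))"

lemma sh_sh: "sh a (sh b \<omega>) = sh (a + b) \<omega>"
  by (simp add: sh_def algebra_simps)

lemma sh_0: "sh 0 \<omega> = \<omega>"
  by (simp add: sh_def)

lemma tau_sh: "tau \<omega> = sh 1 \<omega>"
  by (simp add: sh_def tau_def)

lemma sh_inj: "sh a \<omega> = sh a \<omega>' \<Longrightarrow> \<omega> = \<omega>'"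
  by (metis sh_sh sh_0 add.left_inverse)

definition Per :: "config set" where
  "Per = {\<omega>. \<exists>k. k \<noteq> 0 \<and> sh k \<omega> = \<omega>}"

lemma per_mult_nat: "sh n \<omega> = \<omega> \<Longrightarrow> sh (n * int m) \<omega> = \<omega>"
proof (induction m)
  case 0 then show ?case by (simp add: sh_0)
next
  case (Suc m)
  have "sh (n * int (Suc m)) \<omega> = sh n (sh (n * int m) \<omega>)"
    by (simp add: sh_sh algebra_simps)
  then show ?case using Suc by simp
qed

lemma per_mult: "sh n \<omega> = \<omega> \<Longrightarrow> sh (n * m) \<omega> = \<omega>"
proof (cases "m \<ge> 0")
  case True
  assume h: "sh n \<omega> = \<omega>"
  from True obtain k where "m = int k" by (metis nonneg_eq_int)
  then show ?thesis using per_mult_nat[OF h] by simp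
next
  case False
  assume h: "sh n \<omega> = \<omega>"
  from False obtain k where k: "m = - int k" by (metis neg_int_cases linorder_not_le less_imp_le)
  have "sh (n * m) \<omega> = sh (n * m) (sh (n * int k) \<omega>)" using per_mult_nat[OF h] by simp
  also have "\<dots> = \<omega>" by (simp add: sh_sh k sh_0)
  finally show ?thesis .
qed

lemma per_mod: assumes "sh n \<omega> = \<omega>" shows "\<omega> x = \<omega> (x mod n)"
proof -
  have "sh (n * (x div n)) \<omega> x = \<omega> x" using per_mult[OF assms] by simp
  then show ?thesis by (simp add: sh_def minus_mult_div_eq_mod)
qed

lemma count_fix: "countable {\<omega>. sh (int (Suc n)) \<omega> = \<omega>}"
proof -
  let ?f = "\<lambda>\<omega>::config. map (\<lambda>i. \<omega> (int i)) [0..<Suc n]"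
  have "inj_on ?f {\<omega>. sh (int (Suc n)) \<omega> = \<omega>}"
  proof (rule inj_onI)
    fix \<omega> \<omega>' assume a: "\<omega> \<in> {\<omega>. sh (int (Suc n)) \<omega> = \<omega>}" "\<omega>' \<in> {\<omega>. sh (int (Suc n)) \<omega> = \<omega>}"
      and e: "?f \<omega> = ?f \<omega>'"
    show "\<omega> = \<omega>'"
    proof
      fix x
      define j where "j = nat (x mod int (Suc n))"
      have j: "int j = x mod int (Suc n)" "j < Suc n" unfolding j_def
        by (simp_all add: nat_less_iff)
      have "\<omega> (int j) = \<omega>' (int j)" using e j(2)
        by (metis (no_types, lifting) add_0 diff_zero length_map length_upt nth_map nth_upt)
      moreover have "\<omega> x = \<omega> (int j)" using per_mod[of "int (Suc n)" \<omega> x] a(1) j(1) by simp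
      moreover have "\<omega>' x = \<omega>' (int j)" using per_mod[of "int (Suc n)" \<omega>' x] a(2) j(1) by simp
      ultimately show "\<omega> x = \<omega>' x" by simp
    qed
  qed
  then show ?thesis by (rule countable_image_inj_on[OF countableI_type])
qed

lemma count_Per: "countable Per"
proof -
  have "Per \<subseteq> (\<Union>n. {\<omega>. sh (int (Suc n)) \<omega> = \<omega>})"
  proof
    fix \<omega> assume "\<omega> \<in> Per"
    then obtain k where k: "k \<noteq> 0" "sh k \<omega> = \<omega>" unfolding Per_def by auto
    have k2: "sh (-k) \<omega> = \<omega>" using k(2) by (metis sh_sh sh_0 add.left_inverse)
    have "\<exists>n. sh (int (Suc n)) \<omega> = \<omega>"
    proof (cases "k > 0")
      case True
      then have "int (Suc (nat k - 1)) = k" by simp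
      then show ?thesis using k(2) by (intro exI[of _ "nat k - 1"]) simp
    next
      case False then have "-k > 0" using k(1) by simp
      then have "int (Suc (nat (-k) - 1)) = -k" by simp
      then show ?thesis using k2 by (intro exI[of _ "nat (-k) - 1"]) simp
    qed
    then show "\<omega> \<in> (\<Union>n. {\<omega>. sh (int (Suc n)) \<omega> = \<omega>})" by auto
  qed
  moreover have "countable (\<Union>n. {\<omega>. sh (int (Suc n)) \<omega> = \<omega>})"
    using count_fix by auto
  ultimately show ?thesis by (rule countable_subset)
qed

definition orb :: "config \<Rightarrow> config set" where
  "orb \<omega> = range (\<lambda>k. sh k \<omega>)"

definition rep :: "config \<Rightarrow> config" where
  "rep \<omega> = (SOME \<rho>. \<rho> \<in> orb \<omega>)"

lemma rep_in: "\<exists>m. rep \<omega> = sh m \<omega>"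
proof -
  have "rep \<omega> \<in> orb \<omega>" unfolding rep_def by (rule someI[of _ \<omega>]) (metis orb_def rangeI sh_0)
  then show ?thesis unfolding orb_def by auto
qed

lemma orb_tau: "orb (tau \<omega>) = orb \<omega>"
proof -
  have "range (\<lambda>k. sh k (sh 1 \<omega>)) = range (\<lambda>k. sh k \<omega>)"
  proof
    show "range (\<lambda>k. sh k (sh 1 \<omega>)) \<subseteq> range (\<lambda>k. sh k \<omega>)" by (auto simp: sh_sh)
    show "range (\<lambda>k. sh k \<omega>) \<subseteq> range (\<lambda>k. sh k (sh 1 \<omega>))"
    proof
      fix y assume "y \<in> range (\<lambda>k. sh k \<omega>)"
      then obtain k where "y = sh k \<omega>" by auto
      then have "y = sh (k - 1) (sh 1 \<omega>)" by (simp add: sh_sh)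
      then show "y \<in> range (\<lambda>k. sh k (sh 1 \<omega>))" by auto
    qed
  qed
  then show ?thesis by (simp add: orb_def tau_sh)
qed

lemma rep_tau: "rep (tau \<omega>) = rep \<omega>"
  unfolding rep_def orb_tau ..

lemma Per_sh: "sh m \<omega> \<in> Per \<longleftrightarrow> \<omega> \<in> Per"
proof -
  have "sh k (sh m \<omega>) = sh m \<omega> \<longleftrightarrow> sh k \<omega> = \<omega>" for k
    by (metis sh_sh add.commute sh_inj)
  then show ?thesis unfolding Per_def by auto
qed

lemma uniq: assumes "\<rho> \<notin> Per" "sh a \<rho> = sh b \<rho>" shows "a = b"
proof (rule ccontr)
  assume "a \<noteq> b"
  have "sh (a - b) \<rho> = sh (-b) (sh a \<rho>)" by (simp add: sh_sh)
  also have "\<dots> = \<rho>" using assms(2) by (simp add: sh_sh sh_0)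
  finally have "sh (a - b) \<rho> = \<rho>" .
  moreover have "a - b \<noteq> 0" using \<open>a \<noteq> b\<close> by simp
  ultimately show False using assms(1) unfolding Per_def by blast
qed

definition XX :: "config \<Rightarrow> int option" where
  "XX \<omega> = (if \<omega> \<in> Per then None else Some (THE k. sh k (rep \<omega>) = \<omega>))"

lemma the_k: assumes "\<omega> \<notin> Per" "sh k (rep \<omega>) = \<omega>" shows "(THE k. sh k (rep \<omega>) = \<omega>) = k"
proof (rule the_equality)
  show "sh k (rep \<omega>) = \<omega>" by fact
  fix j assume "sh j (rep \<omega>) = \<omega>"
  moreover obtain m where m: "rep \<omega> = sh m \<omega>" using rep_in by blast
  ultimately show "j = k" using uniq[of "rep \<omega>" j k] assms Per_sh[of m \<omega>] by auto
qed

theorem lemma3: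
  shows "\<exists>X :: config \<Rightarrow> int option.
           countable (X -` {None}) \<and> (\<forall>\<omega>. X (tau \<omega>) = T (X \<omega>))"
proof (intro exI conjI allI)
  show "countable (XX -` {None})"
    using count_Per by (rule countable_subset[rotated]) (auto simp: XX_def split: if_splits)
  fix \<omega>
  show "XX (tau \<omega>) = T (XX \<omega>)"
  proof (cases "\<omega> \<in> Per")
    case True
    then have "tau \<omega> \<in> Per" using Per_sh by (simp add: tau_sh)
    then show ?thesis using True by (simp add: XX_def T_def)
  next
    case False
    then have nt: "tau \<omega> \<notin> Per" using Per_sh by (simp add: tau_sh)
    obtain m where m: "rep \<omega> = sh m \<omega>" using rep_in by blast
    have k: "sh (-m) (rep \<omega>) = \<omega>" using m by (simp add: sh_sh sh_0)
    have k2: "sh (1 - m) (rep (tau \<omega>)) = tau \<omega>" 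
    proof -
      have "sh (1 - m) (rep (tau \<omega>)) = sh 1 (sh (-m) (rep \<omega>))" by (simp add: rep_tau sh_sh)
      then show ?thesis using k by (simp add: tau_sh)
    qed
    show ?thesis using False nt the_k[OF False k] the_k[OF nt k2]
      by (simp add: XX_def T_def)
  qed
qed

end
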